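(* Let $N\ge1$, $z_1,\dots,z_N\in\mathbb{C}^*$, $n_1,\dots,n_N\in\mathbb{C}$, $z=z_1\cdots z_N$, and assume $z^2-z^{-2}\neq0$. Let $U=\mathrm{span}(a_1,\dots,a_N)$, $U'=\mathrm{span}(b_1,\dots,b_N)$ in $\mathrm{Cl}_N$, paired by $\langle a_j,b_i\rangle=\delta_{ij}$, and let \[ \Phi(X)=\sum_{i=1}^N z_1^{-1}\cdots z_{i-1}^{-1}z_{i+1}\cdots z_N\,a_i,\quad \Phi(Y)=\sum_{i=1}^N z_1^{-1}\cdots z_{i-1}^{-1}(z_i^2-z_i^{-2})z_{i+1}\cdots z_N\,b_i,\quad \Phi(G)=\sum_{i=1}^N(n_i+a_ib_i). \] Let $W=\{w\in U:\langle w,\Phi(Y)\rangle=0\}$, $W'=\{w'\in U':\langle\Phi(X),w'\rangle=0\}$, and let $\mathrm{Cl}_W\subset\mathrm{Cl}_N$ be the subalgebra generated by $W\cup W'$. Then the subalgebra of elements of $\mathrm{Cl}_W$ commuting with $\Phi(G)$ is the part of $\mathrm{Cl}_W$ of Euler degree $0$, i.e. the subalgebra generated by the products $ww'$ with $w\in W$, $w'\in W'$. Moreover, if $w_1,\dots,w_d$ is a basis of $W$ and $w'_1,\dots,w'_d$ is the basis of $W'$ with $\langle w_i,w'_j\rangle=\delta_{ij}$, then $E_{ij}\mapsto w_iw'_j$ (where $E_{ij}$ are the matrix units of $\mathfrak{gl}(W)\cong\mathfrak{gl}_d$) extends to an algebra homomorphism $U(\mathfrak{gl}(W))\to\mathrm{Cl}_W\subset\mathrm{Cl}_N$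 whose image is exactly this subalgebra.
   Context: $\mathrm{Cl}_N$ is the Clifford superalgebra over $\mathbb{C}$ generated by odd elements $a_1,\dots,a_N,b_1,\dots,b_N$ with relations $a_ia_j+a_ja_i=0$, $b_ib_j+b_jb_i=0$, $a_ib_j+b_ja_i=\delta_{ij}$. The Euler degree is the $\mathbb{Z}$-grading on $\mathrm{Cl}_N$ with $\deg a_i=1$, $\deg b_i=-1$. $U(\mathfrak{gl}(W))$ is the universal enveloping algebra of the Lie algebra $\mathfrak{gl}(W)$. *)

theory Defs
  imports Complex_Main
begin

text \<open>Concrete model of the Clifford superalgebra Cl_N: its (faithful, and since Cl_N
is simple of dimension 4^N, bijective) spinor representation on the exterior algebra
of C^N, with basis e_S indexed by subsets S of {0..<N}. An element of Cl_N is a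
matrix indexed by pairs of such subsets (entries outside are 0).
Generators are indexed 0..<N (paper: 1..N).\<close>

type_synonym cl = "nat set \<Rightarrow> nat set \<Rightarrow> complex"

definition cl_a :: "nat \<Rightarrow> nat \<Rightarrow> cl" where
  "cl_a N i = (\<lambda>T S. if S \<subseteq> {..<N} \<and> i < N \<and> i \<notin> S \<and> T = insert i S
                     then (-1) ^ card {j\<in>S. j < i} else 0)"

definition cl_b :: "nat \<Rightarrow> nat \<Rightarrow> cl" where
  "cl_b N i = (\<lambda>T S. if S \<subseteq> {..<N} \<and> i < N \<and> i \<in> S \<and> T = S - {i}
                     then (-1) ^ card {j\<in>S. j < i} else 0)"

definition cl_one :: "nat \<Rightarrow> cl" where
  "cl_one N = (\<lambda>T S. if T = S \<and> S \<subseteq> {..<N} then 1 else 0)"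

definition cl_zero :: cl where "cl_zero = (\<lambda>T S. 0)"

definition cl_add :: "cl \<Rightarrow> cl \<Rightarrow> cl" where
  "cl_add x y = (\<lambda>T S. x T S + y T S)"

definition cl_diff :: "cl \<Rightarrow> cl \<Rightarrow> cl" where
  "cl_diff x y = (\<lambda>T S. x T S - y T S)"

definition cl_smult :: "complex \<Rightarrow> cl \<Rightarrow> cl" where
  "cl_smult c x = (\<lambda>T S. c * x T S)"

definition cl_mult :: "nat \<Rightarrow> cl \<Rightarrow> cl \<Rightarrow> cl" where
  "cl_mult N x y = (\<lambda>T S. \<Sum>R\<in>Pow {..<N}. x T R * y R S)"

definition cl_comm :: "nat \<Rightarrow> cl \<Rightarrow> cl \<Rightarrow> cl" where
  "cl_comm N x y = cl_diff (cl_mult N x y) (cl_mult N y x)"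

definition cl_lin :: "nat \<Rightarrow> (nat \<Rightarrow> complex) \<Rightarrow> (nat \<Rightarrow> cl) \<Rightarrow> cl" where
  "cl_lin m c f = (\<lambda>T S. \<Sum>k<m. c k * f k T S)"

inductive_set cl_gen :: "nat \<Rightarrow> cl set \<Rightarrow> cl set" for N G where
  gen: "x \<in> G \<Longrightarrow> x \<in> cl_gen N G"
| one: "cl_one N \<in> cl_gen N G"
| add: "x \<in> cl_gen N G \<Longrightarrow> y \<in> cl_gen N G \<Longrightarrow> cl_add x y \<in> cl_gen N G"
| smult: "x \<in> cl_gen N G \<Longrightarrow> cl_smult c x \<in> cl_gen N G"
| mult: "x \<in> cl_gen N G \<Longrightarrow> y \<in> cl_gen N G \<Longrightarrow> cl_mult N x y \<in> cl_gen N G"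

text \<open>Homogeneous of Euler degree k (deg a_i = 1, deg b_i = -1): in the model,
a_i raises |S| by one and b_i lowers it by one.\<close>
definition cl_euler_homog :: "int \<Rightarrow> cl \<Rightarrow> bool" where
  "cl_euler_homog k x \<longleftrightarrow> (\<forall>T S. x T S \<noteq> 0 \<longrightarrow> int (card T) = int (card S) + k)"

definition cl_U :: "nat \<Rightarrow> cl set" where
  "cl_U N = {cl_lin N c (cl_a N) | c. True}"

definition cl_U' :: "nat \<Rightarrow> cl set" where
  "cl_U' N = {cl_lin N c (cl_b N) | c. True}"

text \<open>Bilinear pairing U x U' -> C with <a_j,b_i> = delta_ij. For u = sum c_i a_i the
coefficient c_i is the entry u {i} {}; for u' = sum d_i b_i, d_i = u' {} {i}.\<close>
definition cl_pair :: "nat \<Rightarrow> cl \<Rightarrow> cl \<Rightarrow> complex" where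
  "cl_pair N u u' = (\<Sum>i<N. u {i} {} * u' {} {i})"

definition PhiX :: "nat \<Rightarrow> (nat \<Rightarrow> complex) \<Rightarrow> cl" where
  "PhiX N z = cl_lin N (\<lambda>i. (\<Prod>j<i. inverse (z j)) * (\<Prod>j\<in>{i<..<N}. z j)) (cl_a N)"

definition PhiY :: "nat \<Rightarrow> (nat \<Rightarrow> complex) \<Rightarrow> cl" where
  "PhiY N z = cl_lin N (\<lambda>i. (\<Prod>j<i. inverse (z j)) * ((z i)^2 - (inverse (z i))^2)
                              * (\<Prod>j\<in>{i<..<N}. z j)) (cl_b N)"

definition PhiG :: "nat \<Rightarrow> (nat \<Rightarrow> complex) \<Rightarrow> cl" where
  "PhiG N n = (\<lambda>T S. \<Sum>i<N. n i * cl_one N T S + cl_mult N (cl_a N i) (cl_b N i) T S)"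

definition cl_W :: "nat \<Rightarrow> (nat \<Rightarrow> complex) \<Rightarrow> cl set" where
  "cl_W N z = {w \<in> cl_U N. cl_pair N w (PhiY N z) = 0}"

definition cl_W' :: "nat \<Rightarrow> (nat \<Rightarrow> complex) \<Rightarrow> cl set" where
  "cl_W' N z = {w' \<in> cl_U' N. cl_pair N (PhiX N z) w' = 0}"

end

theory Submission
  imports Defs
begin

definition supp :: "nat \<Rightarrow> cl \<Rightarrow> bool" where
  "supp N x \<longleftrightarrow> (\<forall>T S. x T S \<noteq> 0 \<longrightarrow> T \<subseteq> {..<N} \<and> S \<subseteq> {..<N})"

lemma mult_assoc: "cl_mult N (cl_mult N x y) u = cl_mult N x (cl_mult N y u)"
  unfolding cl_mult_def
  apply (rule ext)+
  apply (simp add: sum_distrib_left sum_distrib_right mult.assoc)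
  by (rule sum.swap)

lemma mult_add_left: "cl_mult N (cl_add x y) u = cl_add (cl_mult N x u) (cl_mult N y u)"
  unfolding cl_mult_def cl_add_def by (auto simp: distrib_right sum.distrib)
lemma mult_add_right: "cl_mult N u (cl_add x y) = cl_add (cl_mult N u x) (cl_mult N u y)"
  unfolding cl_mult_def cl_add_def by (auto simp: distrib_left sum.distrib)
lemma mult_smult_left: "cl_mult N (cl_smult c x) u = cl_smult c (cl_mult N x u)"
  unfolding cl_mult_def cl_smult_def by (auto simp: sum_distrib_left mult.assoc)
lemma mult_smult_right: "cl_mult N u (cl_smult c x) = cl_smult c (cl_mult N u x)"
  unfolding cl_mult_def cl_smult_def by (auto simp: sum_distrib_left mult.assoc mult.left_commute)
lemma mult_zero_left: "cl_mult N cl_zero u = cl_zero"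
  unfolding cl_mult_def cl_zero_def by auto
lemma mult_zero_right: "cl_mult N u cl_zero = cl_zero"
  unfolding cl_mult_def cl_zero_def by auto

lemma one_mult: assumes "supp N x" shows "cl_mult N (cl_one N) x = x"
proof (rule ext)+
  fix T S
  show "cl_mult N (cl_one N) x T S = x T S"
  proof (cases "T \<subseteq> {..<N}")
    case True
    have "cl_mult N (cl_one N) x T S = (\<Sum>R\<in>Pow {..<N}. if T = R then x R S else 0)"
      unfolding cl_mult_def cl_one_def by (intro sum.cong) auto
    also have "\<dots> = x T S" using True by (subst sum.delta') auto
    finally show ?thesis .
  next
    case False
    then have "x T S = 0" using assms unfolding supp_def by blast
    moreover have "cl_mult N (cl_one N) x T S = 0"
      unfolding cl_mult_def cl_one_def using False by (intro sum.neutral) auto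
    ultimately show ?thesis by simp
  qed
qed

lemma mult_one: assumes "supp N x" shows "cl_mult N x (cl_one N) = x"
proof (rule ext)+
  fix T S
  show "cl_mult N x (cl_one N) T S = x T S"
  proof (cases "S \<subseteq> {..<N}")
    case True
    have "cl_mult N x (cl_one N) T S = (\<Sum>R\<in>Pow {..<N}. if R = S then x T R else 0)"
      unfolding cl_mult_def cl_one_def by (intro sum.cong) auto
    also have "\<dots> = x T S" using True by (subst sum.delta) auto
    finally show ?thesis .
  next
    case False
    then have "x T S = 0" using assms unfolding supp_def by blast
    moreover have "cl_mult N x (cl_one N) T S = 0"
      unfolding cl_mult_def cl_one_def using False by (intro sum.neutral) auto
    ultimately show ?thesis by simp
  qed
qed

lemma lin_mult_left: "cl_mult N (cl_lin m c f) y = cl_lin m c (\<lambda>k. cl_mult N (f k) y)"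
  unfolding cl_mult_def cl_lin_def
  apply (rule ext)+
  apply (simp add: sum_distrib_left sum_distrib_right mult.assoc)
  by (rule sum.swap)

lemma lin_mult_right: "cl_mult N y (cl_lin m c f) = cl_lin m c (\<lambda>k. cl_mult N y (f k))"
  unfolding cl_mult_def cl_lin_def
  apply (rule ext)+
  apply (simp add: sum_distrib_left sum_distrib_right mult.assoc mult.left_commute)
  by (rule sum.swap)

lemma lin_Suc: "cl_lin (Suc m) c f = cl_add (cl_lin m c f) (cl_smult (c m) (f m))"
  unfolding cl_lin_def cl_add_def cl_smult_def by auto
lemma lin_0: "cl_lin 0 c f = cl_zero"
  unfolding cl_lin_def cl_zero_def by auto

lemma mult_a: "cl_mult N x (cl_a N i) T S = (if S \<subseteq> {..<N} \<and> i < N \<and> i \<notin> S then x T (insert i S) * (-1) ^ card {j\<in>S. j < i} else 0)"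
proof (cases "S \<subseteq> {..<N} \<and> i < N \<and> i \<notin> S")
  case True
  then have "cl_mult N x (cl_a N i) T S = (\<Sum>R\<in>Pow {..<N}. if R = insert i S then x T R * (-1) ^ card {j\<in>S. j < i} else 0)"
    unfolding cl_mult_def cl_a_def by (intro sum.cong) auto
  also have "\<dots> = x T (insert i S) * (-1) ^ card {j\<in>S. j < i}"
    using True by (subst sum.delta) auto
  finally show ?thesis using True by simp
next
  case False
  then have "\<And>R. cl_a N i R S = 0" by (auto simp: cl_a_def)
  then show ?thesis using False by (auto simp: cl_mult_def)
qed

lemma mult_b: "cl_mult N x (cl_b N i) T S = (if S \<subseteq> {..<N} \<and> i < N \<and> i \<in> S then x T (S - {i}) * (-1) ^ card {j\<in>S. j < i} else 0)"
proof (cases "S \<subseteq> {..<N} \<and> i < N \<and> i \<in> S")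
  case True
  then have "cl_mult N x (cl_b N i) T S = (\<Sum>R\<in>Pow {..<N}. if R = S - {i} then x T R * (-1) ^ card {j\<in>S. j < i} else 0)"
    unfolding cl_mult_def cl_b_def by (intro sum.cong) auto
  also have "\<dots> = x T (S - {i}) * (-1) ^ card {j\<in>S. j < i}"
    using True by (subst sum.delta) auto
  finally show ?thesis using True by simp
next
  case False
  then have "\<And>R. cl_b N i R S = 0" by (auto simp: cl_b_def)
  then show ?thesis using False by (auto simp: cl_mult_def)
qed


lemma sg_remove:
  assumes "finite S" "j \<in> S"
  shows "(-1::complex) ^ card {l\<in>S - {j}. l < i} = (if j < i then -1 else 1) * (-1) ^ card {l\<in>S. l < i}"
proof (cases "j < i")
  case True
  have e: "{l\<in>S - {j}. l < i} = {l\<in>S. l < i} - {j}" by auto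
  have f: "finite {l\<in>S. l < i}" using assms by auto
  have m: "j \<in> {l\<in>S. l < i}" using assms True by auto
  then have c: "card {l\<in>S. l < i} = Suc (card ({l\<in>S. l < i} - {j}))"
    using f by (simp only: card_Suc_Diff1)
  obtain n where n1: "card ({l\<in>S. l < i} - {j}) = n" by blast
  have n2: "card {l\<in>S. l < i} = Suc n" by (metis c n1)
  show ?thesis unfolding e n1 n2 using True by simp
next
  case False
  then have "{l\<in>S - {j}. l < i} = {l\<in>S. l < i}" by auto
  then show ?thesis using False by simp
qed

lemma sg_insert:
  assumes "finite S" "i \<notin> S"
  shows "(-1::complex) ^ card {l\<in>insert i S. l < j} = (if i < j then -1 else 1) * (-1) ^ card {l\<in>S. l < j}"
proof (cases "i < j")
  case True
  have e: "{l\<in>insert i S. l < j} = insert i {l\<in>S. l < j}" using True by auto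
  have f: "finite {l\<in>S. l < j}" using assms by auto
  have c: "card (insert i {l\<in>S. l < j}) = Suc (card {l\<in>S. l < j})" using f assms by simp
  show ?thesis unfolding e c using True by simp
next
  case False
  then have "{l\<in>insert i S. l < j} = {l\<in>S. l < j}" by auto
  then show ?thesis using False by simp
qed

lemma fin_sub: "S \<subseteq> {..<(N::nat)} \<Longrightarrow> finite S" using finite_subset by blast
lemma ab_ba:
  assumes "i < N" "j < N"
  shows "cl_mult N (cl_a N i) (cl_b N j) T S + cl_mult N (cl_b N j) (cl_a N i) T S
       = (if i = j then cl_one N T S else 0)"
proof (cases "S \<subseteq> {..<N}")
  case SN: True
  then have fS: "finite S" by (rule fin_sub)
  have ab: "cl_mult N (cl_a N i) (cl_b N j) T S = (if j \<in> S then cl_a N i T (S - {j}) * (-1) ^ card {l\<in>S. l < j} else 0)"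
    using SN assms by (simp add: mult_b)
  have ba: "cl_mult N (cl_b N j) (cl_a N i) T S = (if i \<notin> S then cl_b N j T (insert i S) * (-1) ^ card {l\<in>S. l < i} else 0)"
    using SN assms by (simp add: mult_a)
  show ?thesis
  proof (cases "i = j")
    case True
    have e1: "{l\<in>S - {i}. l < i} = {l\<in>S. l < i}" "{l\<in>insert i S. l < i} = {l\<in>S. l < i}" by auto
    have sq: "((-1::complex) ^ card {l\<in>S. l < i}) * (-1) ^ card {l\<in>S. l < i} = 1"
      by (simp add: power_mult_distrib[symmetric])
    show ?thesis
    proof (cases "i \<in> S")
      case iS: True
      have "cl_a N i T (S - {i}) = (if T = S then (-1) ^ card {l\<in>S. l < i} else 0)"
        using iS SN assms unfolding cl_a_def e1 by (auto simp: insert_absorb)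
      then show ?thesis unfolding ab ba using True iS SN sq by (simp add: cl_one_def)
    next
      case iS: False
      have "cl_b N i T (insert i S) = (if T = S then (-1) ^ card {l\<in>S. l < i} else 0)"
        using iS SN assms unfolding cl_b_def e1 by auto
      then show ?thesis unfolding ab ba using True iS SN sq by (simp add: cl_one_def)
    qed
  next
    case False
    have A: "cl_a N i T (S - {j}) = (if i \<notin> S \<and> T = insert i (S - {j}) then (-1) ^ card {l\<in>S - {j}. l < i} else 0)"
      using False SN assms unfolding cl_a_def by auto
    have B: "cl_b N j T (insert i S) = (if j \<in> S \<and> T = insert i (S - {j}) then (-1) ^ card {l\<in>insert i S. l < j} else 0)"
      using False SN assms unfolding cl_b_def by (auto simp: insert_Diff_if)
    show ?thesis
    proof (cases "j \<in> S \<and> i \<notin> S \<and> T = insert i (S - {j})")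
      case True
      then have "cl_mult N (cl_a N i) (cl_b N j) T S + cl_mult N (cl_b N j) (cl_a N i) T S
         = ((if j < i then -1 else 1) + (if i < j then -1 else 1)) * ((-1) ^ card {l\<in>S. l < i} * (-1) ^ card {l\<in>S. l < j})"
      proof -
        have s1: "(-1::complex) ^ card {l\<in>S - {j}. l < i} = (if j < i then -1 else 1) * (-1) ^ card {l\<in>S. l < i}"
          using sg_remove[OF fS] True by blast
        have s2: "(-1::complex) ^ card {l\<in>insert i S. l < j} = (if i < j then -1 else 1) * (-1) ^ card {l\<in>S. l < j}"
          using sg_insert[OF fS] True by blast
        show ?thesis unfolding ab ba A B using True by (simp only: if_True if_False s1 s2 simp_thms) (simp add: algebra_simps)
      qed
      also have "\<dots> = 0" using False by auto
      finally show ?thesis using False by simp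
    next
      case F2: False
      then show ?thesis unfolding ab ba A B using False by auto
    qed
  qed
next
  case False
  then show ?thesis by (auto simp: mult_a mult_b cl_one_def)
qed

lemma aa:
  assumes "i < N" "j < N"
  shows "cl_mult N (cl_a N i) (cl_a N j) T S + cl_mult N (cl_a N j) (cl_a N i) T S = 0"
proof (cases "S \<subseteq> {..<N}")
  case SN: True
  then have fS: "finite S" by (rule fin_sub)
  have ab: "cl_mult N (cl_a N i) (cl_a N j) T S = (if j \<notin> S then cl_a N i T (insert j S) * (-1) ^ card {l\<in>S. l < j} else 0)"
    using SN assms by (simp add: mult_a)
  have ba: "cl_mult N (cl_a N j) (cl_a N i) T S = (if i \<notin> S then cl_a N j T (insert i S) * (-1) ^ card {l\<in>S. l < i} else 0)"
    using SN assms by (simp add: mult_a)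
  have A: "cl_a N i T (insert j S) = (if i \<noteq> j \<and> i \<notin> S \<and> T = insert i (insert j S) then (-1) ^ card {l\<in>insert j S. l < i} else 0)"
    using SN assms unfolding cl_a_def by auto
  have B: "cl_a N j T (insert i S) = (if i \<noteq> j \<and> j \<notin> S \<and> T = insert i (insert j S) then (-1) ^ card {l\<in>insert i S. l < j} else 0)"
    using SN assms unfolding cl_a_def by (auto simp: insert_commute)
  show ?thesis
  proof (cases "i \<noteq> j \<and> i \<notin> S \<and> j \<notin> S \<and> T = insert i (insert j S)")
    case True
    have s1: "(-1::complex) ^ card {l\<in>insert j S. l < i} = (if j < i then -1 else 1) * (-1) ^ card {l\<in>S. l < i}"
      using sg_insert[OF fS] True by blast
    have s2: "(-1::complex) ^ card {l\<in>insert i S. l < j} = (if i < j then -1 else 1) * (-1) ^ card {l\<in>S. l < j}"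
      using sg_insert[OF fS] True by blast
    have "cl_mult N (cl_a N i) (cl_a N j) T S + cl_mult N (cl_a N j) (cl_a N i) T S
         = ((if j < i then -1 else 1) + (if i < j then -1 else 1)) * ((-1) ^ card {l\<in>S. l < i} * (-1) ^ card {l\<in>S. l < j})"
      unfolding ab ba A B using True by (simp only: if_True if_False s1 s2 simp_thms) (simp add: algebra_simps)
    also have "\<dots> = 0" using True by auto
    finally show ?thesis .
  next
    case False
    then show ?thesis unfolding ab ba A B by auto
  qed
next
  case False
  then show ?thesis by (auto simp: mult_a)
qed

lemma bb:
  assumes "i < N" "j < N"
  shows "cl_mult N (cl_b N i) (cl_b N j) T S + cl_mult N (cl_b N j) (cl_b N i) T S = 0"
proof (cases "S \<subseteq> {..<N}")
  case SN: True
  then have fS: "finite S" by (rule fin_sub)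
  have ab: "cl_mult N (cl_b N i) (cl_b N j) T S = (if j \<in> S then cl_b N i T (S - {j}) * (-1) ^ card {l\<in>S. l < j} else 0)"
    using SN assms by (simp add: mult_b)
  have ba: "cl_mult N (cl_b N j) (cl_b N i) T S = (if i \<in> S then cl_b N j T (S - {i}) * (-1) ^ card {l\<in>S. l < i} else 0)"
    using SN assms by (simp add: mult_b)
  have A: "cl_b N i T (S - {j}) = (if i \<noteq> j \<and> i \<in> S \<and> T = S - {i} - {j} then (-1) ^ card {l\<in>S - {j}. l < i} else 0)"
    using SN assms unfolding cl_b_def by (auto simp: Diff_insert2[symmetric] insert_commute)
  have B: "cl_b N j T (S - {i}) = (if i \<noteq> j \<and> j \<in> S \<and> T = S - {i} - {j} then (-1) ^ card {l\<in>S - {i}. l < j} else 0)"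
    using SN assms unfolding cl_b_def by auto
  show ?thesis
  proof (cases "i \<noteq> j \<and> i \<in> S \<and> j \<in> S \<and> T = S - {i} - {j}")
    case True
    have s1: "(-1::complex) ^ card {l\<in>S - {j}. l < i} = (if j < i then -1 else 1) * (-1) ^ card {l\<in>S. l < i}"
      using sg_remove[OF fS] True by blast
    have s2: "(-1::complex) ^ card {l\<in>S - {i}. l < j} = (if i < j then -1 else 1) * (-1) ^ card {l\<in>S. l < j}"
      using sg_remove[OF fS] True by blast
    have "cl_mult N (cl_b N i) (cl_b N j) T S + cl_mult N (cl_b N j) (cl_b N i) T S
         = ((if j < i then -1 else 1) + (if i < j then -1 else 1)) * ((-1) ^ card {l\<in>S. l < i} * (-1) ^ card {l\<in>S. l < j})"
      unfolding ab ba A B using True by (simp only: if_True if_False s1 s2 simp_thms) (simp add: algebra_simps)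
    also have "\<dots> = 0" using True by auto
    finally show ?thesis .
  next
    case False
    then show ?thesis unfolding ab ba A B by auto
  qed
next
  case False
  then show ?thesis by (auto simp: mult_b)
qed

lemma lin_lin: "cl_mult N (cl_lin m c f) (cl_lin m' e g) T S = (\<Sum>k<m. \<Sum>l<m'. c k * e l * cl_mult N (f k) (g l) T S)"
  by (subst lin_mult_left, subst lin_mult_right, simp add: cl_lin_def sum_distrib_left mult.assoc)

lemma a_entry: "i < N \<Longrightarrow> cl_lin N c (cl_a N) {i} {} = c i"
proof -
  assume i: "i < N"
  have "cl_lin N c (cl_a N) {i} {} = (\<Sum>k<N. if k = i then c k else 0)"
    unfolding cl_lin_def cl_a_def by (intro sum.cong) auto
  then show ?thesis using i by simp
qed

lemma b_entry: "i < N \<Longrightarrow> cl_lin N c (cl_b N) {} {i} = c i"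
proof -
  assume i: "i < N"
  have e0: "{j. j = i \<and> j < i} = {}" by auto
  have "cl_lin N c (cl_b N) {} {i} = (\<Sum>k<N. if k = i then c k else 0)"
    unfolding cl_lin_def cl_b_def by (intro sum.cong) (auto simp: e0)
  then show ?thesis using i by simp
qed

lemma anti_UU':
  assumes "u \<in> cl_U N" "u' \<in> cl_U' N"
  shows "cl_add (cl_mult N u u') (cl_mult N u' u) = cl_smult (cl_pair N u u') (cl_one N)"
proof -
  obtain c where u: "u = cl_lin N c (cl_a N)" using assms(1) unfolding cl_U_def by blast
  obtain e where u': "u' = cl_lin N e (cl_b N)" using assms(2) unfolding cl_U'_def by blast
  have p: "cl_pair N u u' = (\<Sum>k<N. c k * e k)"
    unfolding cl_pair_def u u' by (intro sum.cong) (auto simp: a_entry b_entry)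
  show ?thesis
  proof (rule ext)+
    fix T S
    have "cl_add (cl_mult N u u') (cl_mult N u' u) T S
      = (\<Sum>k<N. \<Sum>l<N. c k * e l * cl_mult N (cl_a N k) (cl_b N l) T S) + (\<Sum>l<N. \<Sum>k<N. e l * c k * cl_mult N (cl_b N l) (cl_a N k) T S)"
      unfolding cl_add_def u u' lin_lin by simp
    also have "\<dots> = (\<Sum>k<N. \<Sum>l<N. c k * e l * cl_mult N (cl_a N k) (cl_b N l) T S) + (\<Sum>k<N. \<Sum>l<N. e l * c k * cl_mult N (cl_b N l) (cl_a N k) T S)"
      by (subst (2) sum.swap) simp
    also have "\<dots> = (\<Sum>k<N. \<Sum>l<N. c k * e l * (cl_mult N (cl_a N k) (cl_b N l) T S + cl_mult N (cl_b N l) (cl_a N k) T S))"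
      by (simp add: sum.distrib[symmetric] algebra_simps)
    also have "\<dots> = (\<Sum>k<N. \<Sum>l<N. if l = k then c k * e k * cl_one N T S else 0)"
      by (intro sum.cong refl) (simp add: ab_ba)
    also have "\<dots> = (\<Sum>k<N. c k * e k) * cl_one N T S"
      by (simp add: sum_distrib_right)
    finally show "cl_add (cl_mult N u u') (cl_mult N u' u) T S = cl_smult (cl_pair N u u') (cl_one N) T S"
      unfolding p cl_smult_def by simp
  qed
qed

lemma anti_UU:
  assumes "u \<in> cl_U N" "v \<in> cl_U N"
  shows "cl_add (cl_mult N u v) (cl_mult N v u) = cl_zero"
proof -
  obtain c where u: "u = cl_lin N c (cl_a N)" using assms(1) unfolding cl_U_def by blast
  obtain e where v: "v = cl_lin N e (cl_a N)" using assms(2) unfolding cl_U_def by blast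
  show ?thesis
  proof (rule ext)+
    fix T S
    have "cl_add (cl_mult N u v) (cl_mult N v u) T S
      = (\<Sum>k<N. \<Sum>l<N. c k * e l * cl_mult N (cl_a N k) (cl_a N l) T S) + (\<Sum>l<N. \<Sum>k<N. e l * c k * cl_mult N (cl_a N l) (cl_a N k) T S)"
      unfolding cl_add_def u v lin_lin by simp
    also have "\<dots> = (\<Sum>k<N. \<Sum>l<N. c k * e l * cl_mult N (cl_a N k) (cl_a N l) T S) + (\<Sum>k<N. \<Sum>l<N. e l * c k * cl_mult N (cl_a N l) (cl_a N k) T S)"
      by (subst (2) sum.swap) simp
    also have "\<dots> = (\<Sum>k<N. \<Sum>l<N. c k * e l * (cl_mult N (cl_a N k) (cl_a N l) T S + cl_mult N (cl_a N l) (cl_a N k) T S))"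
      by (simp add: sum.distrib[symmetric] algebra_simps)
    also have "\<dots> = 0"
      by (intro sum.neutral ballI) (simp add: aa)
    finally show "cl_add (cl_mult N u v) (cl_mult N v u) T S = cl_zero T S"
      unfolding cl_zero_def by simp
  qed
qed

lemma anti_U'U':
  assumes "u \<in> cl_U' N" "v \<in> cl_U' N"
  shows "cl_add (cl_mult N u v) (cl_mult N v u) = cl_zero"
proof -
  obtain c where u: "u = cl_lin N c (cl_b N)" using assms(1) unfolding cl_U'_def by blast
  obtain e where v: "v = cl_lin N e (cl_b N)" using assms(2) unfolding cl_U'_def by blast
  show ?thesis
  proof (rule ext)+
    fix T S
    have "cl_add (cl_mult N u v) (cl_mult N v u) T S
      = (\<Sum>k<N. \<Sum>l<N. c k * e l * cl_mult N (cl_b N k) (cl_b N l) T S) + (\<Sum>l<N. \<Sum>k<N. e l * c k * cl_mult N (cl_b N l) (cl_b N k) T S)"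
      unfolding cl_add_def u v lin_lin by simp
    also have "\<dots> = (\<Sum>k<N. \<Sum>l<N. c k * e l * cl_mult N (cl_b N k) (cl_b N l) T S) + (\<Sum>k<N. \<Sum>l<N. e l * c k * cl_mult N (cl_b N l) (cl_b N k) T S)"
      by (subst (2) sum.swap) simp
    also have "\<dots> = (\<Sum>k<N. \<Sum>l<N. c k * e l * (cl_mult N (cl_b N k) (cl_b N l) T S + cl_mult N (cl_b N l) (cl_b N k) T S))"
      by (simp add: sum.distrib[symmetric] algebra_simps)
    also have "\<dots> = 0"
      by (intro sum.neutral ballI) (simp add: bb)
    finally show "cl_add (cl_mult N u v) (cl_mult N v u) T S = cl_zero T S"
      unfolding cl_zero_def by simp
  qed
qed

lemma supp_a: "supp N (cl_a N i)" unfolding supp_def cl_a_def by auto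
lemma supp_b: "supp N (cl_b N i)" unfolding supp_def cl_b_def by auto
lemma supp_one: "supp N (cl_one N)" unfolding supp_def cl_one_def by auto
lemma supp_zero: "supp N cl_zero" unfolding supp_def cl_zero_def by auto
lemma supp_add: "supp N x \<Longrightarrow> supp N y \<Longrightarrow> supp N (cl_add x y)" unfolding supp_def cl_add_def by (metis add.right_neutral add_0)
lemma supp_smult: "supp N x \<Longrightarrow> supp N (cl_smult c x)" unfolding supp_def cl_smult_def by auto
lemma supp_mult:
  assumes "supp N x" "supp N y" shows "supp N (cl_mult N x y)"
  unfolding supp_def
proof (intro allI impI)
  fix T S assume "cl_mult N x y T S \<noteq> 0"
  then obtain R where "x T R * y R S \<noteq> 0" unfolding cl_mult_def
    by (meson sum.not_neutral_contains_not_neutral)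
  then have "x T R \<noteq> 0" "y R S \<noteq> 0" by auto
  then show "T \<subseteq> {..<N} \<and> S \<subseteq> {..<N}" using assms unfolding supp_def by blast
qed
lemma supp_lin: "(\<And>k. k < m \<Longrightarrow> supp N (f k)) \<Longrightarrow> supp N (cl_lin m c f)"
  by (induction m) (auto simp: lin_0 lin_Suc supp_zero supp_add supp_smult)
lemma supp_U: "u \<in> cl_U N \<Longrightarrow> supp N u" unfolding cl_U_def by (auto intro!: supp_lin supp_a)
lemma supp_U': "u \<in> cl_U' N \<Longrightarrow> supp N u" unfolding cl_U'_def by (auto intro!: supp_lin supp_b)
lemma supp_gen: assumes "\<forall>g\<in>G. supp N g" "x \<in> cl_gen N G" shows "supp N x"
  using assms(2) by induction (auto intro: supp_one supp_add supp_smult supp_mult assms(1)[rule_format])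

lemma homog_zero: "cl_euler_homog k cl_zero" unfolding cl_euler_homog_def cl_zero_def by auto
lemma homog_one: "cl_euler_homog 0 (cl_one N)" unfolding cl_euler_homog_def cl_one_def by auto
lemma homog_add: "cl_euler_homog k x \<Longrightarrow> cl_euler_homog k y \<Longrightarrow> cl_euler_homog k (cl_add x y)"
  unfolding cl_euler_homog_def cl_add_def by (metis add.right_neutral add_0)
lemma homog_smult: "cl_euler_homog k x \<Longrightarrow> cl_euler_homog k (cl_smult c x)"
  unfolding cl_euler_homog_def cl_smult_def by auto
lemma homog_mult:
  assumes "cl_euler_homog k x" "cl_euler_homog l y" shows "cl_euler_homog (k + l) (cl_mult N x y)"
  unfolding cl_euler_homog_def
proof (intro allI impI)
  fix T S assume "cl_mult N x y T S \<noteq> 0"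
  then obtain R where "x T R * y R S \<noteq> 0" unfolding cl_mult_def
    by (meson sum.not_neutral_contains_not_neutral)
  then have "x T R \<noteq> 0" "y R S \<noteq> 0" by auto
  then have "int (card T) = int (card R) + k" "int (card R) = int (card S) + l"
    using assms unfolding cl_euler_homog_def by blast+
  then show "int (card T) = int (card S) + (k + l)" by simp
qed
lemma homog_lin: "(\<And>j. j < m \<Longrightarrow> cl_euler_homog k (f j)) \<Longrightarrow> cl_euler_homog k (cl_lin m c f)"
  by (induction m) (auto simp: lin_0 lin_Suc homog_zero homog_add homog_smult)
lemma homog_a: "cl_euler_homog 1 (cl_a N i)"
  unfolding cl_euler_homog_def
proof (intro allI impI)
  fix T S assume "cl_a N i T S \<noteq> 0"
  then have "S \<subseteq> {..<N}" "i \<notin> S" "T = insert i S" unfolding cl_a_def by (auto split: if_splits)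
  moreover then have "finite S" by (simp add: fin_sub)
  ultimately show "int (card T) = int (card S) + 1" by simp
qed
lemma homog_b: "cl_euler_homog (-1) (cl_b N i)"
  unfolding cl_euler_homog_def
proof (intro allI impI)
  fix T S assume "cl_b N i T S \<noteq> 0"
  then have "S \<subseteq> {..<N}" "i \<in> S" "T = S - {i}" unfolding cl_b_def by (auto split: if_splits)
  moreover then have "finite S" by (simp add: fin_sub)
  ultimately have "card S = Suc (card T)" by (metis card_Suc_Diff1)
  then show "int (card T) = int (card S) + - 1" by simp
qed
lemma homog_U: "u \<in> cl_U N \<Longrightarrow> cl_euler_homog 1 u" unfolding cl_U_def by (auto intro!: homog_lin homog_a)
lemma homog_U': "u \<in> cl_U' N \<Longrightarrow> cl_euler_homog (-1) u" unfolding cl_U'_def by (auto intro!: homog_lin homog_b)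

lemma ab_same: "i < N \<Longrightarrow> cl_mult N (cl_a N i) (cl_b N i) T S = (if S \<subseteq> {..<N} \<and> i \<in> S \<and> T = S then 1 else 0)"
proof -
  assume i: "i < N"
  have e1: "{l\<in>S - {i}. l < i} = {l\<in>S. l < i}" by auto
  have sq: "((-1::complex) ^ card {l\<in>S. l < i}) * (-1) ^ card {l\<in>S. l < i} = 1"
    by (simp add: power_mult_distrib[symmetric])
  show ?thesis
  proof (cases "S \<subseteq> {..<N} \<and> i \<in> S")
    case True
    have "cl_a N i T (S - {i}) = (if T = S then (-1) ^ card {l\<in>S. l < i} else 0)"
      using True i unfolding cl_a_def e1 by (auto simp: insert_absorb)
    then show ?thesis using True i sq by (simp add: mult_b)
  next
    case False
    then show ?thesis by (auto simp: mult_b)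
  qed
qed

lemma PhiG_eq: "PhiG N n T S = (if T = S \<and> S \<subseteq> {..<N} then (\<Sum>i<N. n i) + of_nat (card S) else 0)"
proof -
  have "PhiG N n T S = (\<Sum>i<N. n i * cl_one N T S) + (\<Sum>i<N. cl_mult N (cl_a N i) (cl_b N i) T S)"
    unfolding PhiG_def by (simp add: sum.distrib)
  also have "(\<Sum>i<N. cl_mult N (cl_a N i) (cl_b N i) T S) = (\<Sum>i<N. if S \<subseteq> {..<N} \<and> i \<in> S \<and> T = S then 1 else 0)"
    by (intro sum.cong) (auto simp: ab_same)
  also have "\<dots> = (if S \<subseteq> {..<N} \<and> T = S then of_nat (card S) else 0)"
  proof (cases "S \<subseteq> {..<N} \<and> T = S")
    case True
    then have "{..<N} \<inter> S = S" by auto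
    then show ?thesis using True by (simp add: sum.If_cases)
  next
    case False
    have "(\<Sum>i<N. if S \<subseteq> {..<N} \<and> i \<in> S \<and> T = S then (1::complex) else 0) = 0"
      using False by (intro sum.neutral) auto
    then show ?thesis using False by (simp only: if_False)
  qed
  finally show ?thesis by (auto simp: cl_one_def sum_distrib_right)
qed

lemma commute_PhiG:
  assumes "supp N x"
  shows "cl_mult N x (PhiG N n) = cl_mult N (PhiG N n) x \<longleftrightarrow> cl_euler_homog 0 x"
proof -
  define D where "D S = (\<Sum>i<N. n i) + of_nat (card S)" for S :: "nat set"
  have L: "cl_mult N x (PhiG N n) T S = x T S * D S" for T S
  proof (cases "S \<subseteq> {..<N}")
    case True
    have "cl_mult N x (PhiG N n) T S = (\<Sum>R\<in>Pow {..<N}. if R = S then x T R * D S else 0)"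
      unfolding cl_mult_def PhiG_eq D_def by (intro sum.cong) auto
    then show ?thesis using True by simp
  next
    case False
    then have "x T S = 0" using assms unfolding supp_def by blast
    then show ?thesis using False unfolding cl_mult_def PhiG_eq by (auto intro!: sum.neutral)
  qed
  have R: "cl_mult N (PhiG N n) x T S = D T * x T S" for T S
  proof (cases "T \<subseteq> {..<N}")
    case True
    have "cl_mult N (PhiG N n) x T S = (\<Sum>R\<in>Pow {..<N}. if R = T then D T * x R S else 0)"
      unfolding cl_mult_def PhiG_eq D_def by (intro sum.cong) auto
    then show ?thesis using True by (simp add: sum.delta')
  next
    case False
    then have "x T S = 0" using assms unfolding supp_def by blast
    then show ?thesis using False unfolding cl_mult_def PhiG_eq by (auto intro!: sum.neutral)
  qed
  have "cl_mult N x (PhiG N n) = cl_mult N (PhiG N n) x \<longleftrightarrow> (\<forall>T S. x T S * D S = D T * x T S)"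
    using L R by (auto simp: fun_eq_iff)
  also have "\<dots> \<longleftrightarrow> cl_euler_homog 0 x"
    unfolding cl_euler_homog_def D_def by (auto simp: algebra_simps) metis+
  finally show ?thesis .
qed

lemma mult_diff_right: "cl_mult N u (cl_diff x y) = cl_diff (cl_mult N u x) (cl_mult N u y)"
  unfolding cl_mult_def cl_diff_def by (auto simp: right_diff_distrib sum_subtractf)
lemma mult_diff_left: "cl_mult N (cl_diff x y) u = cl_diff (cl_mult N x u) (cl_mult N y u)"
  unfolding cl_mult_def cl_diff_def by (auto simp: left_diff_distrib sum_subtractf)

lemma anti_y:
  assumes "u \<in> cl_U N" "u' \<in> cl_U' N" "supp N y"
  shows "cl_mult N u' (cl_mult N u y) = cl_diff (cl_smult (cl_pair N u u') y) (cl_mult N u (cl_mult N u' y))"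
    and "cl_mult N u (cl_mult N u' y) = cl_diff (cl_smult (cl_pair N u u') y) (cl_mult N u' (cl_mult N u y))"
proof -
  have "cl_mult N (cl_add (cl_mult N u u') (cl_mult N u' u)) y = cl_mult N (cl_smult (cl_pair N u u') (cl_one N)) y"
    using anti_UU'[OF assms(1,2)] by simp
  then have "cl_add (cl_mult N u (cl_mult N u' y)) (cl_mult N u' (cl_mult N u y)) = cl_smult (cl_pair N u u') y"
    by (simp add: mult_add_left mult_smult_left mult_assoc one_mult[OF assms(3)])
  then have e: "\<And>T S. cl_mult N u (cl_mult N u' y) T S + cl_mult N u' (cl_mult N u y) T S = cl_pair N u u' * y T S"
    unfolding cl_add_def cl_smult_def by metis
  show "cl_mult N u' (cl_mult N u y) = cl_diff (cl_smult (cl_pair N u u') y) (cl_mult N u (cl_mult N u' y))"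
    unfolding cl_diff_def cl_smult_def using e by (intro ext) (metis add_diff_cancel_left')
  show "cl_mult N u (cl_mult N u' y) = cl_diff (cl_smult (cl_pair N u u') y) (cl_mult N u' (cl_mult N u y))"
    unfolding cl_diff_def cl_smult_def using e by (intro ext) (metis add_diff_cancel_right')
qed

lemma anti_UU_y:
  assumes "u \<in> cl_U N" "v \<in> cl_U N"
  shows "cl_mult N v (cl_mult N u y) T S = - cl_mult N u (cl_mult N v y) T S"
proof -
  have "cl_mult N (cl_add (cl_mult N u v) (cl_mult N v u)) y = cl_mult N cl_zero y"
    using anti_UU[OF assms] by simp
  then have "cl_add (cl_mult N u (cl_mult N v y)) (cl_mult N v (cl_mult N u y)) = cl_zero"
    by (simp add: mult_add_left mult_assoc mult_zero_left)
  then have "cl_mult N u (cl_mult N v y) T S + cl_mult N v (cl_mult N u y) T S = 0"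
    unfolding cl_add_def cl_zero_def by metis
  then show ?thesis by (simp add: eq_neg_iff_add_eq_0 add.commute)
qed

lemma anti_U'U'_pt:
  assumes "u \<in> cl_U' N" "v \<in> cl_U' N"
  shows "cl_mult N v u = cl_smult (-1) (cl_mult N u v)"
proof -
  have "cl_add (cl_mult N u v) (cl_mult N v u) = cl_zero" using anti_U'U'[OF assms] .
  then have "\<And>T S. cl_mult N u v T S + cl_mult N v u T S = 0"
    unfolding cl_add_def cl_zero_def by metis
  then show ?thesis unfolding cl_smult_def by (intro ext) (simp add: eq_neg_iff_add_eq_0 add.commute)
qed

lemma part3:
  assumes A: "A \<in> cl_U N" and C: "C \<in> cl_U N" and B: "B \<in> cl_U' N" and D: "D \<in> cl_U' N"
  shows "cl_comm N (cl_mult N A B) (cl_mult N C D)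
       = cl_diff (cl_smult (cl_pair N C B) (cl_mult N A D)) (cl_smult (cl_pair N A D) (cl_mult N C B))"
proof -
  have sA: "supp N A" "supp N C" using A C by (simp_all add: supp_U)
  have sB: "supp N B" "supp N D" using B D by (simp_all add: supp_U')
  have h1: "cl_mult N B (cl_mult N C D) = cl_diff (cl_smult (cl_pair N C B) D) (cl_mult N C (cl_mult N B D))"
    using anti_y(1)[OF C B sB(2)] .
  have h2: "cl_mult N D (cl_mult N A B) = cl_diff (cl_smult (cl_pair N A D) B) (cl_mult N A (cl_mult N D B))"
    using anti_y(1)[OF A D sB(1)] .
  have e1: "cl_mult N (cl_mult N A B) (cl_mult N C D) = cl_diff (cl_smult (cl_pair N C B) (cl_mult N A D)) (cl_mult N A (cl_mult N C (cl_mult N B D)))"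
    by (simp add: mult_assoc h1 mult_diff_right mult_smult_right)
  have e2: "cl_mult N (cl_mult N C D) (cl_mult N A B) = cl_diff (cl_smult (cl_pair N A D) (cl_mult N C B)) (cl_mult N C (cl_mult N A (cl_mult N D B)))"
    by (simp add: mult_assoc h2 mult_diff_right mult_smult_right)
  have e3: "cl_mult N C (cl_mult N A (cl_mult N D B)) T S = cl_mult N A (cl_mult N C (cl_mult N B D)) T S" for T S
  proof -
    have "cl_mult N D B = cl_smult (-1) (cl_mult N B D)" using anti_U'U'_pt[OF B D] .
    then have "cl_mult N C (cl_mult N A (cl_mult N D B)) = cl_smult (-1) (cl_mult N C (cl_mult N A (cl_mult N B D)))"
      by (simp add: mult_smult_right)
    then show ?thesis using anti_UU_y[OF A C, of "cl_mult N B D" T S] by (simp add: cl_smult_def)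
  qed
  show ?thesis unfolding cl_comm_def e1 e2
    by (intro ext) (simp add: cl_diff_def cl_smult_def e3)
qed

inductive_set Lset :: "nat \<Rightarrow> cl set \<Rightarrow> cl set" for N G where
  Lone: "cl_one N \<in> Lset N G"
| Lgen: "g \<in> G \<Longrightarrow> x \<in> Lset N G \<Longrightarrow> cl_mult N g x \<in> Lset N G"
| Ladd: "x \<in> Lset N G \<Longrightarrow> y \<in> Lset N G \<Longrightarrow> cl_add x y \<in> Lset N G"
| Lsm: "x \<in> Lset N G \<Longrightarrow> cl_smult c x \<in> Lset N G"

lemma L_supp: assumes "\<forall>g\<in>G. supp N g" "x \<in> Lset N G" shows "supp N x"
  using assms(2) by induction (auto intro: supp_one supp_add supp_smult supp_mult assms(1)[rule_format])

lemma L_mult: assumes "\<forall>g\<in>G. supp N g" "x \<in> Lset N G" "y \<in> Lset N G" shows "cl_mult N x y \<in> Lset N G"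
  using assms(2)
proof induction
  case Lone
  then show ?case using one_mult[OF L_supp[OF assms(1,3)]] assms(3) by simp
next
  case (Lgen g x)
  then show ?case by (simp add: mult_assoc Lset.Lgen)
next
  case (Ladd x y)
  then show ?case by (simp add: mult_add_left Lset.Ladd)
next
  case (Lsm x c)
  then show ?case by (simp add: mult_smult_left Lset.Lsm)
qed

lemma gen_L: assumes "\<forall>g\<in>G. supp N g" "x \<in> cl_gen N G" shows "x \<in> Lset N G"
  using assms(2)
proof induction
  case (gen x)
  then have "cl_mult N x (cl_one N) \<in> Lset N G" by (simp add: Lset.Lgen Lset.Lone)
  then show ?case using mult_one[of N x] assms(1) gen by simp
next
  case (mult x y)
  then show ?case using L_mult[OF assms(1)] by blast
qed (auto intro: Lset.intros)

definition proj :: "int \<Rightarrow> cl \<Rightarrow> cl" where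
  "proj k x = (\<lambda>T S. if int (card T) = int (card S) + k then x T S else 0)"

lemma proj_mult:
  assumes "cl_euler_homog h g"
  shows "proj k (cl_mult N g y) = cl_mult N g (proj (k - h) y)"
proof (rule ext)+
  fix T S
  have H: "\<And>R. g T R \<noteq> 0 \<Longrightarrow> int (card T) = int (card R) + h" using assms unfolding cl_euler_homog_def by blast
  have P: "(if int (card T) = int (card S) + k then g T R * y R S else 0) = g T R * (if int (card R) = int (card S) + (k - h) then y R S else 0)" for R
  proof (cases "g T R = 0")
    case False
    then have "int (card T) = int (card R) + h" by (rule H)
    then have "(int (card T) = int (card S) + k) = (int (card R) = int (card S) + (k - h))" by linarith
    then show ?thesis by simp
  qed simp
  have "proj k (cl_mult N g y) T S = (\<Sum>R\<in>Pow {..<N}. if int (card T) = int (card S) + k then g T R * y R S else 0)"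
    unfolding proj_def cl_mult_def by simp
  also have "\<dots> = cl_mult N g (proj (k - h) y) T S"
    unfolding cl_mult_def proj_def P ..
  finally show "proj k (cl_mult N g y) T S = cl_mult N g (proj (k - h) y) T S" .
qed

lemma proj_add: "proj k (cl_add x y) = cl_add (proj k x) (proj k y)"
  unfolding proj_def cl_add_def by (intro ext) auto
lemma proj_smult: "proj k (cl_smult c x) = cl_smult c (proj k x)"
  unfolding proj_def cl_smult_def by (intro ext) auto
lemma proj_one: "proj k (cl_one N) = (if k = 0 then cl_one N else cl_zero)"
  unfolding proj_def cl_one_def cl_zero_def by (intro ext) auto
lemma proj_homog: "cl_euler_homog k x \<Longrightarrow> proj k x = x"
  unfolding proj_def cl_euler_homog_def by (intro ext) metis

locale clW =
  fixes N d :: nat and w w' :: "nat \<Rightarrow> cl"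
  assumes wU: "\<forall>k<d. w k \<in> cl_U N" and w'U: "\<forall>k<d. w' k \<in> cl_U' N"
    and WU: "{cl_lin d c w | c. True} \<subseteq> cl_U N" and W'U: "{cl_lin d c w' | c. True} \<subseteq> cl_U' N"
begin

abbreviation "Wl \<equiv> {cl_lin d c w | c. True}"
abbreviation "Wl' \<equiv> {cl_lin d c w' | c. True}"
abbreviation "Q \<equiv> cl_gen N {cl_mult N (w i) (w' j) | i j. i < d \<and> j < d}"

lemma supp_w: "k < d \<Longrightarrow> supp N (w k)" using wU supp_U by blast
lemma supp_w': "k < d \<Longrightarrow> supp N (w' k)" using w'U supp_U' by blast
lemma supp_Q: "x \<in> Q \<Longrightarrow> supp N x"
  by (rule supp_gen[of _ N]) (auto intro!: supp_mult supp_w supp_w')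

lemma Q_zero: "cl_zero \<in> Q"
proof -
  have "cl_smult 0 (cl_one N) \<in> Q" by (intro cl_gen.intros)
  moreover have "cl_smult 0 (cl_one N) = cl_zero" unfolding cl_smult_def cl_zero_def by simp
  ultimately show ?thesis by simp
qed

lemma Q_lin: "(\<And>k. k < m \<Longrightarrow> f k \<in> Q) \<Longrightarrow> cl_lin m c f \<in> Q"
  by (induction m) (auto simp: lin_0 lin_Suc Q_zero intro: cl_gen.intros)

lemma diff_eq: "cl_diff x y = cl_add x (cl_smult (-1) y)"
  unfolding cl_diff_def cl_add_def cl_smult_def by simp

lemma Q_diff: "x \<in> Q \<Longrightarrow> y \<in> Q \<Longrightarrow> cl_diff x y \<in> Q"
  unfolding diff_eq by (intro cl_gen.add cl_gen.smult)

lemma wQ: "i < d \<Longrightarrow> u' \<in> Wl' \<Longrightarrow> cl_mult N (w i) u' \<in> Q"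
proof -
  assume i: "i < d" and "u' \<in> Wl'"
  then obtain c where u': "u' = cl_lin d c w'" by blast
  have "cl_lin d c (\<lambda>k. cl_mult N (w i) (w' k)) \<in> Q"
    by (rule Q_lin, rule cl_gen.gen) (use i in blast)
  then show ?thesis unfolding u' lin_mult_right .
qed

lemma Qw': "j < d \<Longrightarrow> u \<in> Wl \<Longrightarrow> cl_mult N u (w' j) \<in> Q"
proof -
  assume j: "j < d" and "u \<in> Wl"
  then obtain c where u: "u = cl_lin d c w" by blast
  have "cl_lin d c (\<lambda>k. cl_mult N (w k) (w' j)) \<in> Q"
    by (rule Q_lin, rule cl_gen.gen) (use j in blast)
  then show ?thesis unfolding u lin_mult_left .
qed

inductive M :: "int \<Rightarrow> cl \<Rightarrow> bool" where
  Mq: "x \<in> Q \<Longrightarrow> M 0 x"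
| Mw: "k \<ge> 0 \<Longrightarrow> i < d \<Longrightarrow> M k x \<Longrightarrow> M (k + 1) (cl_mult N (w i) x)"
| Mw': "k \<le> 0 \<Longrightarrow> j < d \<Longrightarrow> M k x \<Longrightarrow> M (k - 1) (cl_mult N (w' j) x)"
| Mz: "M k cl_zero"
| Madd: "M k x \<Longrightarrow> M k y \<Longrightarrow> M k (cl_add x y)"
| Msm: "M k x \<Longrightarrow> M k (cl_smult c x)"

lemma M_diff: "M k x \<Longrightarrow> M k y \<Longrightarrow> M k (cl_diff x y)"
  unfolding diff_eq by (intro M.intros)

lemma M_lin: "(\<And>j. j < m \<Longrightarrow> M k (f j)) \<Longrightarrow> M k (cl_lin m c f)"
  by (induction m) (auto simp: lin_0 lin_Suc intro: M.intros)

lemma M0Q: "M k x \<Longrightarrow> k = 0 \<Longrightarrow> x \<in> Q"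
  by (induction rule: M.induct) (auto simp: Q_zero intro: cl_gen.intros)

lemma M_supp: "M k x \<Longrightarrow> supp N x"
  by (induction rule: M.induct) (auto simp: supp_Q supp_zero intro: supp_add supp_smult supp_mult supp_w supp_w')

lemma M_W: "k \<ge> 0 \<Longrightarrow> M k x \<Longrightarrow> u \<in> Wl \<Longrightarrow> M (k + 1) (cl_mult N u x)"
  by (auto simp: lin_mult_left intro!: M_lin M.Mw)

lemma M_W': "k \<le> 0 \<Longrightarrow> M k x \<Longrightarrow> u \<in> Wl' \<Longrightarrow> M (k - 1) (cl_mult N u x)"
  by (auto simp: lin_mult_left intro!: M_lin M.Mw')

lemma key: "M k x \<Longrightarrow> (\<forall>u\<in>Wl. M (k + 1) (cl_mult N u x)) \<and> (\<forall>u'\<in>Wl'. M (k - 1) (cl_mult N u' x))"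
proof (induction rule: M.induct)
  case (Mq x)
  then show ?case using M_W[of 0 x] M_W'[of 0 x] M.Mq by auto
next
  case (Mw k i x)
  have Mx: "M k x" by fact
  have Mx1: "M (k + 1) (cl_mult N (w i) x)" using Mw by (intro M.Mw)
  have sx: "supp N x" using Mx by (rule M_supp)
  have P1: "\<forall>u\<in>Wl. M (k + 1 + 1) (cl_mult N u (cl_mult N (w i) x))"
    using M_W[OF _ Mx1] Mw(1) by auto
  have P2: "M (k + 1 - 1) (cl_mult N u' (cl_mult N (w i) x))" if u': "u' \<in> Wl'" for u'
  proof -
    have e: "cl_mult N u' (cl_mult N (w i) x) = cl_diff (cl_smult (cl_pair N (w i) u') x) (cl_mult N (w i) (cl_mult N u' x))"
      using anti_y(1)[of "w i" N u' x] wU Mw(2) W'U u' sx by auto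
    show ?thesis
    proof (cases "k = 0")
      case True
      then have xQ: "x \<in> Q" using M0Q Mx by blast
      have "cl_mult N (w i) (cl_mult N u' x) = cl_mult N (cl_mult N (w i) u') x" by (simp add: mult_assoc)
      also have "\<dots> \<in> Q" using wQ[OF Mw(2) u'] xQ by (rule cl_gen.mult)
      finally have "cl_diff (cl_smult (cl_pair N (w i) u') x) (cl_mult N (w i) (cl_mult N u' x)) \<in> Q"
        using xQ by (intro Q_diff cl_gen.smult)
      then show ?thesis unfolding e using True by (simp add: M.Mq)
    next
      case False
      then have "M (k - 1) (cl_mult N u' x)" using Mw.IH u' by blast
      then have "M (k - 1 + 1) (cl_mult N (w i) (cl_mult N u' x))" using False Mw(1,2) by (intro M.Mw) auto
      then show ?thesis unfolding e using Mx by (auto intro!: M_diff M.Msm)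
    qed
  qed
  show ?case using P1 P2 by simp
next
  case (Mw' k j x)
  have Mx: "M k x" by fact
  have Mx1: "M (k - 1) (cl_mult N (w' j) x)" using Mw' by (intro M.Mw')
  have sx: "supp N x" using Mx by (rule M_supp)
  have P2: "\<forall>u\<in>Wl'. M (k - 1 - 1) (cl_mult N u (cl_mult N (w' j) x))"
    using M_W'[OF _ Mx1] Mw'(1) by auto
  have P1: "M (k - 1 + 1) (cl_mult N u (cl_mult N (w' j) x))" if u: "u \<in> Wl" for u
  proof -
    have e: "cl_mult N u (cl_mult N (w' j) x) = cl_diff (cl_smult (cl_pair N u (w' j)) x) (cl_mult N (w' j) (cl_mult N u x))"
      using anti_y(2)[of u N "w' j" x] w'U Mw'(2) WU u sx by auto
    show ?thesis
    proof (cases "k = 0")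
      case True
      then have xQ: "x \<in> Q" using M0Q Mx by blast
      have "cl_mult N u (cl_mult N (w' j) x) = cl_mult N (cl_mult N u (w' j)) x" by (simp add: mult_assoc)
      also have "\<dots> \<in> Q" using Qw'[OF Mw'(2) u] xQ by (rule cl_gen.mult)
      finally show ?thesis using True by (simp add: M.Mq)
    next
      case False
      then have "M (k + 1) (cl_mult N u x)" using Mw'.IH u by blast
      then have "M (k + 1 - 1) (cl_mult N (w' j) (cl_mult N u x))" using False Mw'(1,2) by (intro M.Mw') auto
      then show ?thesis unfolding e using Mx by (auto intro!: M_diff M.Msm)
    qed
  qed
  show ?case using P1 P2 by simp
next
  case (Mz k)
  then show ?case by (simp add: mult_zero_right M.Mz)
next
  case (Madd k x y)
  then show ?case by (simp add: mult_add_right M.Madd)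
next
  case (Msm k x c)
  then show ?case by (simp add: mult_smult_right M.Msm)
qed

lemma supp_WW: "\<forall>g\<in>Wl \<union> Wl'. supp N g"
  using WU W'U supp_U supp_U' by blast

lemma proj_M: "x \<in> Lset N (Wl \<union> Wl') \<Longrightarrow> M k (proj k x)"
proof (induction x arbitrary: k rule: Lset.induct)
  case Lone
  then show ?case by (auto simp: proj_one intro: M.Mz M.Mq cl_gen.one)
next
  case (Lgen g x)
  show ?case
  proof (cases "g \<in> Wl")
    case True
    then have "cl_euler_homog 1 g" using WU homog_U by blast
    then have "proj k (cl_mult N g x) = cl_mult N g (proj (k - 1) x)" by (rule proj_mult)
    moreover have "M (k - 1 + 1) (cl_mult N g (proj (k - 1) x))" using key[OF Lgen.IH[of "k - 1"]] True by blast
    ultimately show ?thesis by simp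
  next
    case False
    then have g: "g \<in> Wl'" using Lgen by blast
    then have "cl_euler_homog (-1) g" using W'U homog_U' by blast
    then have "proj k (cl_mult N g x) = cl_mult N g (proj (k - -1) x)" by (rule proj_mult)
    moreover have "M (k + 1 - 1) (cl_mult N g (proj (k + 1) x))" using key[OF Lgen.IH[of "k + 1"]] g by blast
    ultimately show ?thesis by simp
  qed
next
  case (Ladd x y)
  then show ?case by (simp add: proj_add M.Madd)
next
  case (Lsm x c)
  then show ?case by (simp add: proj_smult M.Msm)
qed

lemma E0_Q: "x \<in> cl_gen N (Wl \<union> Wl') \<Longrightarrow> cl_euler_homog 0 x \<Longrightarrow> x \<in> Q"
proof -
  assume x: "x \<in> cl_gen N (Wl \<union> Wl')" and h: "cl_euler_homog 0 x"
  have "x \<in> Lset N (Wl \<union> Wl')" using gen_L[OF supp_WW x] .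
  then have "M 0 (proj 0 x)" by (rule proj_M)
  then have "M 0 x" using proj_homog[OF h] by simp
  then show ?thesis using M0Q by blast
qed

end


lemma gen_mono: assumes "G \<subseteq> H" "x \<in> cl_gen N G" shows "x \<in> cl_gen N H"
  using assms(2) by induction (use assms(1) in \<open>auto intro: cl_gen.intros\<close>)

theorem mainTheorem3:
  fixes N d :: nat and z n :: "nat \<Rightarrow> complex" and w w' :: "nat \<Rightarrow> cl"
  assumes "N \<ge> 1"
    and "\<forall>i<N. z i \<noteq> 0"
    and "(\<Prod>i<N. z i)^2 - (inverse (\<Prod>i<N. z i))^2 \<noteq> 0"
    and "\<forall>k<d. w k \<in> cl_W N z" and "\<forall>k<d. w' k \<in> cl_W' N z"
    and "cl_W N z = {cl_lin d c w | c. True}"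
    and "\<forall>c. cl_lin d c w = cl_zero \<longrightarrow> (\<forall>k<d. c k = 0)"
    and "cl_W' N z = {cl_lin d c w' | c. True}"
    and "\<forall>c. cl_lin d c w' = cl_zero \<longrightarrow> (\<forall>k<d. c k = 0)"
    and "\<forall>i<d. \<forall>j<d. cl_pair N (w i) (w' j) = (if i = j then 1 else 0)"
  shows "{x \<in> cl_gen N (cl_W N z \<union> cl_W' N z). cl_mult N x (PhiG N n) = cl_mult N (PhiG N n) x}
           = {x \<in> cl_gen N (cl_W N z \<union> cl_W' N z). cl_euler_homog 0 x}
       \<and> {x \<in> cl_gen N (cl_W N z \<union> cl_W' N z). cl_euler_homog 0 x}
           = cl_gen N {cl_mult N u u' | u u'. u \<in> cl_W N z \<and> u' \<in> cl_W' N z}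
       \<and> (\<forall>i<d. \<forall>j<d. \<forall>k<d. \<forall>l<d.
            cl_comm N (cl_mult N (w i) (w' j)) (cl_mult N (w k) (w' l))
              = cl_diff (cl_smult (if j = k then 1 else 0) (cl_mult N (w i) (w' l)))
                        (cl_smult (if l = i then 1 else 0) (cl_mult N (w k) (w' j))))
       \<and> cl_gen N {cl_mult N (w i) (w' j) | i j. i < d \<and> j < d}
           = {x \<in> cl_gen N (cl_W N z \<union> cl_W' N z). cl_euler_homog 0 x}"
proof -
  let ?W = "{cl_lin d c w | c. True}" and ?W' = "{cl_lin d c w' | c. True}"
  have W: "cl_W N z = ?W" and W': "cl_W' N z = ?W'" using assms(6,8) by auto
  have WU0: "cl_W N z \<subseteq> cl_U N" and W'U0: "cl_W' N z \<subseteq> cl_U' N" unfolding cl_W_def cl_W'_def by auto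
  interpret clW N d w w'
    by unfold_locales (use assms(4,5) WU0 W'U0 W W' in auto)
  let ?E = "cl_gen N (cl_W N z \<union> cl_W' N z)"
  let ?P = "cl_gen N {cl_mult N u u' | u u'. u \<in> cl_W N z \<and> u' \<in> cl_W' N z}"
  have p1: "{x \<in> ?E. cl_mult N x (PhiG N n) = cl_mult N (PhiG N n) x} = {x \<in> ?E. cl_euler_homog 0 x}"
  proof -
    have "supp N x" if "x \<in> ?E" for x using supp_gen[OF _ that] supp_WW W W' by auto
    then show ?thesis using commute_PhiG[of N _ n] by auto
  qed
  have QP: "Q \<subseteq> ?P"
  proof
    fix x assume "x \<in> Q"
    then show "x \<in> ?P"
      by (rule gen_mono[rotated]) (use assms(4,5) in blast)
  qed
  have PE: "x \<in> ?E \<and> cl_euler_homog 0 x" if "x \<in> ?P" for x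
    using that
  proof (induction x rule: cl_gen.induct)
    case (gen x)
    then obtain u u' where x: "x = cl_mult N u u'" and u: "u \<in> cl_W N z" and u': "u' \<in> cl_W' N z" by blast
    have "x \<in> ?E" unfolding x using u u' by (intro cl_gen.mult cl_gen.gen) auto
    moreover have "cl_euler_homog (1 + -1) x" unfolding x
      using u u' WU0 W'U0 homog_U homog_U' by (intro homog_mult) auto
    ultimately show ?case by simp
  next
    case one
    then show ?case by (simp add: cl_gen.one homog_one)
  next
    case (add x y)
    then show ?case by (simp add: cl_gen.add homog_add)
  next
    case (smult x c)
    then show ?case by (simp add: cl_gen.smult homog_smult)
  next
    case (mult x y)
    then have "cl_euler_homog (0 + 0) (cl_mult N x y)" by (intro homog_mult) auto
    then show ?case using mult by (simp add: cl_gen.mult)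
  qed
  have EQ: "x \<in> Q" if "x \<in> ?E" "cl_euler_homog 0 x" for x
    using E0_Q[of x] that W W' by simp
  have eq1: "{x \<in> ?E. cl_euler_homog 0 x} = ?P"
  proof (intro equalityI subsetI)
    fix x assume "x \<in> {x \<in> ?E. cl_euler_homog 0 x}"
    then show "x \<in> ?P" using EQ QP by blast
  next
    fix x assume "x \<in> ?P" then show "x \<in> {x \<in> ?E. cl_euler_homog 0 x}" using PE by blast
  qed
  have eq2: "Q = {x \<in> ?E. cl_euler_homog 0 x}"
  proof (intro equalityI subsetI)
    fix x assume "x \<in> {x \<in> ?E. cl_euler_homog 0 x}"
    then show "x \<in> Q" using EQ by blast
  next
    fix x assume "x \<in> Q" then show "x \<in> {x \<in> ?E. cl_euler_homog 0 x}" using PE QP by blast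
  qed
  have p3: "cl_comm N (cl_mult N (w i) (w' j)) (cl_mult N (w k) (w' l))
              = cl_diff (cl_smult (if j = k then 1 else 0) (cl_mult N (w i) (w' l)))
                        (cl_smult (if l = i then 1 else 0) (cl_mult N (w k) (w' j)))"
    if "i < d" "j < d" "k < d" "l < d" for i j k l
  proof -
    have "cl_comm N (cl_mult N (w i) (w' j)) (cl_mult N (w k) (w' l))
       = cl_diff (cl_smult (cl_pair N (w k) (w' j)) (cl_mult N (w i) (w' l))) (cl_smult (cl_pair N (w i) (w' l)) (cl_mult N (w k) (w' j)))"
      using that wU w'U by (intro part3) auto
    moreover have "cl_pair N (w k) (w' j) = (if j = k then 1 else 0)" "cl_pair N (w i) (w' l) = (if l = i then 1 else 0)"
      using assms(10) that by auto
    ultimately show ?thesis by simp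
  qed
  have p3': "\<forall>i<d. \<forall>j<d. \<forall>k<d. \<forall>l<d.
            cl_comm N (cl_mult N (w i) (w' j)) (cl_mult N (w k) (w' l))
              = cl_diff (cl_smult (if j = k then 1 else 0) (cl_mult N (w i) (w' l)))
                        (cl_smult (if l = i then 1 else 0) (cl_mult N (w k) (w' j)))"
    using p3 by blast
  show ?thesis by (intro conjI) (rule p1, rule eq1, rule p3', rule eq2)
qed

end
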